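(* Let $A$ be a closed $\forall^+$ type of system $\mathcal F$ which is provable, i.e. there is a closed $\lambda$-term $u$ with $\vdash_{\mathcal F} u : A$. Then $A$ is a data type: $|A|\neq\emptyset$ and every $t\in|A|$ $\beta$-reduces to a closed $\lambda$-term.
   Context: $\lambda$-terms are those of the untyped $\lambda$-calculus ($\Lambda$ their set); $u\succ_f v$ means $v$ is obtained from $u$ by weak head reduction (repeatedly reducing the redex $(\lambda x u)v$ in a term $(\lambda x u)vv_1\dots v_m$). Types of system $\mathcal F$: built from type variables with $\rightarrow$, $\forall$; only proper types (in every $\forall XA$, $X$ occurs free in $A$). Typing: (ax) $\Gamma \vdash x_i : A_i$ for $x_i:A_i\in\Gamma$; ($\rightarrow_i$) from $\Gamma, x:B \vdash t : C$ infer $\Gamma \vdash \lambda x t : B \rightarrow C$; ($\rightarrow_e$) from $\Gamma \vdash u : B\rightarrow C$, $\Gamma \vdash v : B$ infer $\Gamma \vdash (u)v : C$; ($\forall_i$) from $\Gamma \vdash t : A$, $X$ not free in $\Gamma$, infer $\Gamma \vdash t : \forall X A$; ($\forall_e$) from $\Gamma \vdash t : \forall X A$ infer $\Gamma \vdash t : A[C/X]$. A set $G\subseteq\Lambda$ is saturated if $u\in G$ and $t\succ_f u$ imply $t\in G$. For $G,G'\subseteq\Lambda$, $G\rightarrow G'=\{u : (u)t\in G' \text{ for all } t\in G\}$. An interpretation $I$ maps each type variable to a saturated set; $|A\rightarrow B|_I=|A|_I\rightarrow|B|_I$, $|\forall XA|_I=\bigcap\{|A|_{I[X\leftarrow G]}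 : G \text{ saturated}\}$, and $|A|=\bigcap_I|A|_I$. The classes $\forall^+$, $\forall^-$: every type variable is both; if $A$ is $\forall^+$ (resp. $\forall^-$) and $B$ is $\forall^-$ (resp. $\forall^+$) then $B\rightarrow A$ is $\forall^+$ (resp. $\forall^-$); if $A$ is $\forall^+$ and $X$ is free in $A$ then $\forall XA$ is $\forall^+$. *)

theory Defs
  imports Main
begin

datatype lterm = LVar nat | LApp lterm lterm | LLam lterm

fun lt_lift :: "lterm \<Rightarrow> nat \<Rightarrow> lterm" where
  "lt_lift (LVar i) k = (if i < k then LVar i else LVar (Suc i))"
| "lt_lift (LApp s t) k = LApp (lt_lift s k) (lt_lift t k)"
| "lt_lift (LLam t) k = LLam (lt_lift t (Suc k))"

fun lt_subst :: "lterm \<Rightarrow> lterm \<Rightarrow> nat \<Rightarrow> lterm" where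
  "lt_subst (LVar i) s k = (if k < i then LVar (i - 1) else if i = k then s else LVar i)"
| "lt_subst (LApp t u) s k = LApp (lt_subst t s k) (lt_subst u s k)"
| "lt_subst (LLam t) s k = LLam (lt_subst t (lt_lift s 0) (Suc k))"

fun lt_closed_at :: "nat \<Rightarrow> lterm \<Rightarrow> bool" where
  "lt_closed_at k (LVar i) = (i < k)"
| "lt_closed_at k (LApp s t) = (lt_closed_at k s \<and> lt_closed_at k t)"
| "lt_closed_at k (LLam t) = lt_closed_at (Suc k) t"

definition lt_closed :: "lterm \<Rightarrow> bool" where
  "lt_closed t = lt_closed_at 0 t"

inductive beta :: "lterm \<Rightarrow> lterm \<Rightarrow> bool" where
  beta_redex: "beta (LApp (LLam t) s) (lt_subst t s 0)"
| beta_appL: "beta s s' \<Longrightarrow> beta (LApp s t) (LApp s' t)"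
| beta_appR: "beta t t' \<Longrightarrow> beta (LApp s t) (LApp s t')"
| beta_abs: "beta t t' \<Longrightarrow> beta (LLam t) (LLam t')"

inductive whstep :: "lterm \<Rightarrow> lterm \<Rightarrow> bool" where
  wh_redex: "whstep (LApp (LLam t) s) (lt_subst t s 0)"
| wh_app: "whstep s s' \<Longrightarrow> whstep (LApp s t) (LApp s' t)"

definition whred :: "lterm \<Rightarrow> lterm \<Rightarrow> bool" where
  "whred = whstep\<^sup>*\<^sup>*"

datatype ty = TVar nat | Arr ty ty | All ty

fun ty_lift :: "ty \<Rightarrow> nat \<Rightarrow> ty" where
  "ty_lift (TVar i) k = (if i < k then TVar i else TVar (Suc i))"
| "ty_lift (Arr A B) k = Arr (ty_lift A k) (ty_lift B k)"
| "ty_lift (All A) k = All (ty_lift A (Suc k))"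

fun ty_subst :: "ty \<Rightarrow> ty \<Rightarrow> nat \<Rightarrow> ty" where
  "ty_subst (TVar i) C k = (if k < i then TVar (i - 1) else if i = k then C else TVar i)"
| "ty_subst (Arr A B) C k = Arr (ty_subst A C k) (ty_subst B C k)"
| "ty_subst (All A) C k = All (ty_subst A (ty_lift C 0) (Suc k))"

fun ty_free :: "nat \<Rightarrow> ty \<Rightarrow> bool" where
  "ty_free k (TVar i) = (i = k)"
| "ty_free k (Arr A B) = (ty_free k A \<or> ty_free k B)"
| "ty_free k (All A) = ty_free (Suc k) A"

fun ty_closed_at :: "nat \<Rightarrow> ty \<Rightarrow> bool" where
  "ty_closed_at k (TVar i) = (i < k)"
| "ty_closed_at k (Arr A B) = (ty_closed_at k A \<and> ty_closed_at k B)"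
| "ty_closed_at k (All A) = ty_closed_at (Suc k) A"

definition ty_closed :: "ty \<Rightarrow> bool" where
  "ty_closed A = ty_closed_at 0 A"

fun proper :: "ty \<Rightarrow> bool" where
  "proper (TVar i) = True"
| "proper (Arr A B) = (proper A \<and> proper B)"
| "proper (All A) = (proper A \<and> ty_free 0 A)"

inductive typing :: "ty list \<Rightarrow> lterm \<Rightarrow> ty \<Rightarrow> bool" where
  T_ax: "i < length \<Gamma> \<Longrightarrow> typing \<Gamma> (LVar i) (\<Gamma> ! i)"
| T_absI: "proper B \<Longrightarrow> typing (B # \<Gamma>) t C \<Longrightarrow> typing \<Gamma> (LLam t) (Arr B C)"
| T_appE: "typing \<Gamma> u (Arr B C) \<Longrightarrow> typing \<Gamma> v B \<Longrightarrow> typing \<Gamma> (LApp u v) C"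
| T_allI: "typing (map (\<lambda>T. ty_lift T 0) \<Gamma>) t A \<Longrightarrow> ty_free 0 A \<Longrightarrow> typing \<Gamma> t (All A)"
| T_allE: "typing \<Gamma> t (All A) \<Longrightarrow> proper C \<Longrightarrow> typing \<Gamma> t (ty_subst A C 0)"

definition saturated :: "lterm set \<Rightarrow> bool" where
  "saturated G \<longleftrightarrow> (\<forall>u t. u \<in> G \<longrightarrow> whred t u \<longrightarrow> t \<in> G)"

definition arrow_set :: "lterm set \<Rightarrow> lterm set \<Rightarrow> lterm set" where
  "arrow_set G G' = {u. \<forall>t\<in>G. LApp u t \<in> G'}"

definition shift_interp :: "lterm set \<Rightarrow> (nat \<Rightarrow> lterm set) \<Rightarrow> nat \<Rightarrow> lterm set" where
  "shift_interp G I = (\<lambda>n. case n of 0 \<Rightarrow> G | Suc m \<Rightarrow> I m)"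

fun interp :: "ty \<Rightarrow> (nat \<Rightarrow> lterm set) \<Rightarrow> lterm set" where
  "interp (TVar n) I = I n"
| "interp (Arr A B) I = arrow_set (interp A I) (interp B I)"
| "interp (All A) I = \<Inter> {interp A (shift_interp G I) | G. saturated G}"

definition realize :: "ty \<Rightarrow> lterm set" where
  "realize A = \<Inter> {interp A I | I. \<forall>n. saturated (I n)}"

inductive fpos :: "ty \<Rightarrow> bool" and fneg :: "ty \<Rightarrow> bool" where
  pos_var: "fpos (TVar i)"
| neg_var: "fneg (TVar i)"
| pos_arr: "fpos A \<Longrightarrow> fneg B \<Longrightarrow> fpos (Arr B A)"
| neg_arr: "fneg A \<Longrightarrow> fpos B \<Longrightarrow> fneg (Arr B A)"
| pos_all: "fpos A \<Longrightarrow> ty_free 0 A \<Longrightarrow> fpos (All A)"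

end

theory Submission
  imports Defs
begin

declare lt_subst.simps(1) [simp del]
declare if_not_P [simp] not_less_eq [simp]

lemma subst_eq [simp]: "lt_subst (LVar k) u k = u"
  by (simp add: lt_subst.simps)

lemma subst_gt [simp]: "i < j \<Longrightarrow> lt_subst (LVar j) u i = LVar (j - 1)"
  by (simp add: lt_subst.simps)

lemma subst_lt [simp]: "j < i \<Longrightarrow> lt_subst (LVar j) u i = LVar j"
  by (simp add: lt_subst.simps)

lemma lift_lift:
    "i < k + 1 \<Longrightarrow> lt_lift (lt_lift t i) (Suc k) = lt_lift (lt_lift t k) i"
  by (induct t arbitrary: i k) auto

lemma lift_subst [simp]:
    "j < i + 1 \<Longrightarrow> lt_lift (lt_subst t s j) i = lt_subst (lt_lift t (i + 1)) (lt_lift s i) j"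
  by (induct t arbitrary: i j s)
    (simp_all add: diff_Suc lt_subst.simps lift_lift split: nat.split)

lemma lift_subst_lt:
    "i < j + 1 \<Longrightarrow> lt_lift (lt_subst t s j) i = lt_subst (lt_lift t i) (lt_lift s i) (j + 1)"
  by (induct t arbitrary: i j s) (simp_all add: lt_subst.simps lift_lift)

lemma subst_lift [simp]:
    "lt_subst (lt_lift t k) s k = t"
  by (induct t arbitrary: k s) simp_all

lemma subst_subst:
    "i < j + 1 \<Longrightarrow> lt_subst (lt_subst t (lt_lift v i) (Suc j)) (lt_subst u v j) i
       = lt_subst (lt_subst t u i) v j"
  by (induct t arbitrary: i j u v)
    (simp_all add: diff_Suc lt_subst.simps lift_lift [symmetric] lift_subst_lt
      split: nat.split)

lemma rt_beta_Abs: "beta\<^sup>*\<^sup>* s s' \<Longrightarrow> beta\<^sup>*\<^sup>* (LLam s) (LLam s')"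
  by (induct set: rtranclp) (blast intro: rtranclp.rtrancl_into_rtrancl beta.intros)+

lemma rt_beta_AppL: "beta\<^sup>*\<^sup>* s s' \<Longrightarrow> beta\<^sup>*\<^sup>* (LApp s t) (LApp s' t)"
  by (induct set: rtranclp) (blast intro: rtranclp.rtrancl_into_rtrancl beta.intros)+

lemma rt_beta_AppR: "beta\<^sup>*\<^sup>* t t' \<Longrightarrow> beta\<^sup>*\<^sup>* (LApp s t) (LApp s t')"
  by (induct set: rtranclp) (blast intro: rtranclp.rtrancl_into_rtrancl beta.intros)+

lemma rt_beta_App: "beta\<^sup>*\<^sup>* s s' \<Longrightarrow> beta\<^sup>*\<^sup>* t t' \<Longrightarrow> beta\<^sup>*\<^sup>* (LApp s t) (LApp s' t')"
  by (blast intro: rt_beta_AppL rt_beta_AppR rtranclp_trans)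

lemma whstep_beta: "whstep s t \<Longrightarrow> beta s t"
  by (induct rule: whstep.induct) (auto intro: beta.intros)

lemma whred_beta: "whred s t \<Longrightarrow> beta\<^sup>*\<^sup>* s t"
  unfolding whred_def by (induct rule: rtranclp_induct) (auto intro: whstep_beta rtranclp.rtrancl_into_rtrancl)

lemma whred_app: "whred s s' \<Longrightarrow> whred (LApp s t) (LApp s' t)"
  unfolding whred_def by (induct rule: rtranclp_induct) (auto intro: wh_app rtranclp.rtrancl_into_rtrancl)

lemma closed_mono: "lt_closed_at k t \<Longrightarrow> k \<le> k' \<Longrightarrow> lt_closed_at k' t"
  by (induct t arbitrary: k k') auto

lemma closed_ex: "\<exists>k. lt_closed_at k t"
proof (induct t)
  case (LVar x) then show ?case by (rule exI[of _ "Suc x"]) simp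
next
  case (LApp t1 t2)
  then obtain k1 k2 where "lt_closed_at k1 t1" "lt_closed_at k2 t2" by blast
  then show ?case by (intro exI[of _ "max k1 k2"]) (auto intro: closed_mono)
next
  case (LLam t)
  then obtain k where "lt_closed_at k t" by blast
  then show ?case by (intro exI[of _ k]) (auto intro: closed_mono)
qed

lemma closed_lift: "lt_closed_at k s \<Longrightarrow> lt_closed_at (Suc k) (lt_lift s j)"
  by (induct s arbitrary: k j) auto

lemma closed_subst: "lt_closed_at (Suc k) b \<Longrightarrow> lt_closed_at k s \<Longrightarrow> j \<le> k \<Longrightarrow> lt_closed_at k (lt_subst b s j)"
  by (induct b arbitrary: k s j) (auto simp: lt_subst.simps closed_lift)

lemma beta_closed: "beta s t \<Longrightarrow> lt_closed_at k s \<Longrightarrow> lt_closed_at k t"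
  by (induct arbitrary: k rule: beta.induct) (auto intro: closed_subst)

lemma betas_closed: "beta\<^sup>*\<^sup>* s t \<Longrightarrow> lt_closed_at k s \<Longrightarrow> lt_closed_at k t"
  by (induct rule: rtranclp_induct) (auto intro: beta_closed)

fun vok :: "nat \<Rightarrow> nat \<Rightarrow> lterm \<Rightarrow> bool" where
  "vok x k (LVar i) = (i < k \<or> i = x + k)"
| "vok x k (LApp s t) = (vok x k s \<and> vok x k t)"
| "vok x k (LLam t) = vok x (Suc k) t"

lemma vok_closed: "vok x k t \<Longrightarrow> lt_closed_at (x + k) t \<Longrightarrow> lt_closed_at k t"
  by (induct t arbitrary: k) auto

lemma vok_subst: "vok x k (lt_subst s (LVar (x + k)) k) \<Longrightarrow> vok x (Suc k) s"
proof (induct s arbitrary: k)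
  case (LVar i)
  then show ?case by (cases "k < i") (auto simp: lt_subst.simps split: if_splits)
next
  case (LApp s1 s2) then show ?case by auto
next
  case (LLam s)
  then show ?case by auto
qed

section \<open>reflection of beta along substitution of a variable\<close>

lemma refl1: "beta (lt_subst s (LVar y) k) r \<Longrightarrow> \<exists>s'. beta s s' \<and> r = lt_subst s' (LVar y) k"
proof (induct s arbitrary: y k r)
  case (LVar i)
  define j where "j = (if k < i then i - 1 else if i = k then y else i)"
  have j: "lt_subst (LVar i) (LVar y) k = LVar j" by (simp add: lt_subst.simps j_def)
  from LVar have "beta (LVar j) r" by (simp only: j)
  then show ?case by (cases rule: beta.cases)
next
  case (LLam b)
  from LLam.prems have "beta (LLam (lt_subst b (LVar (Suc y)) (Suc k))) r" by simp
  then obtain r' where r: "r = LLam r'" and b: "beta (lt_subst b (LVar (Suc y)) (Suc k)) r'"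
    by (cases rule: beta.cases) simp_all
  from LLam.hyps[OF b] obtain s' where "beta b s'" "r' = lt_subst s' (LVar (Suc y)) (Suc k)" by blast
  then show ?case using r by (intro exI[of _ "LLam s'"]) (auto intro: beta.intros)
next
  case (LApp s1 s2)
  from LApp.prems have "beta (LApp (lt_subst s1 (LVar y) k) (lt_subst s2 (LVar y) k)) r" by simp
  then show ?case
  proof (cases rule: beta.cases)
    case (beta_redex t)
    then obtain b0 where s1: "s1 = LLam b0"
      by (cases s1) (auto simp: lt_subst.simps split: if_splits)
    with beta_redex have t: "t = lt_subst b0 (LVar (Suc y)) (Suc k)" by simp
    have "r = lt_subst (lt_subst b0 s2 0) (LVar y) k"
      using beta_redex t subst_subst[of 0 k b0 "LVar y" s2] by simp
    then show ?thesis using s1 by (intro exI[of _ "lt_subst b0 s2 0"]) (auto intro: beta.intros)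
  next
    case (beta_appL s')
    from LApp.hyps(1)[OF beta_appL(2)] obtain a where "beta s1 a" "s' = lt_subst a (LVar y) k" by blast
    then show ?thesis using beta_appL by (intro exI[of _ "LApp a s2"]) (auto intro: beta.intros)
  next
    case (beta_appR t')
    from LApp.hyps(2)[OF beta_appR(2)] obtain a where "beta s2 a" "t' = lt_subst a (LVar y) k" by blast
    then show ?thesis using beta_appR by (intro exI[of _ "LApp s1 a"]) (auto intro: beta.intros)
  qed
qed

lemma reflstar: "beta\<^sup>*\<^sup>* (lt_subst s (LVar y) k) r \<Longrightarrow> \<exists>s'. beta\<^sup>*\<^sup>* s s' \<and> r = lt_subst s' (LVar y) k"
proof (induct rule: rtranclp_induct)
  case base then show ?case by blast
next
  case (step r r2)
  then obtain s' where s': "beta\<^sup>*\<^sup>* s s'" "r = lt_subst s' (LVar y) k" by blast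
  with step(2) have "beta (lt_subst s' (LVar y) k) r2" by simp
  then obtain s'' where "beta s' s''" "r2 = lt_subst s'' (LVar y) k" using refl1 by blast
  moreover have "beta\<^sup>*\<^sup>* s s''" using s'(1) calculation(1) by (rule rtranclp.rtrancl_into_rtrancl)
  ultimately show ?case by blast
qed

lemma pull_arg: "beta\<^sup>*\<^sup>* a r \<Longrightarrow> a = LApp t (LVar x) \<Longrightarrow> vok x 0 r \<Longrightarrow> \<exists>t''. beta\<^sup>*\<^sup>* t t'' \<and> vok x 0 t''"
proof (induct arbitrary: t rule: converse_rtranclp_induct)
  case base then show ?case by auto
next
  case (step a a')
  from step(1) step(4) have "beta (LApp t (LVar x)) a'" by simp
  then show ?case
  proof (cases rule: beta.cases)
    case (beta_redex s)
    with step(2) reflstar[of s x 0 r] obtain s' where s': "beta\<^sup>*\<^sup>* s s'" "r = lt_subst s' (LVar x) 0"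
      by auto
    with step(5) vok_subst[of x 0 s'] have "vok x 1 s'" by simp
    then show ?thesis using s' beta_redex by (intro exI[of _ "LLam s'"]) (auto intro: rt_beta_Abs)
  next
    case (beta_appL t')
    from step(3)[OF beta_appL(1) step(5)] obtain t'' where "beta\<^sup>*\<^sup>* t' t''" "vok x 0 t''" by blast
    then show ?thesis using beta_appL by (blast intro: converse_rtranclp_into_rtranclp)
  next
    case (beta_appR t')
    from beta_appR(2) show ?thesis by (cases rule: beta.cases)
  qed
qed

section \<open>the positivity lemma\<close>

definition Pset :: "nat \<Rightarrow> lterm set" where
  "Pset x = {t. \<exists>t'. beta\<^sup>*\<^sup>* t t' \<and> vok x 0 t'}"

lemma Pset_sat: "saturated (Pset x)"
  unfolding saturated_def Pset_def by (blast dest: whred_beta intro: rtranclp_trans)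

lemma Pset_var: "LVar x \<in> Pset x"
  unfolding Pset_def by auto

lemma Pset_app: "v \<in> Pset x \<Longrightarrow> w \<in> Pset x \<Longrightarrow> LApp v w \<in> Pset x"
  unfolding Pset_def by (auto intro: rt_beta_App)

lemma Pset_pull: "LApp t (LVar x) \<in> Pset x \<Longrightarrow> t \<in> Pset x"
  unfolding Pset_def using pull_arg by blast

lemma shift_const: "shift_interp G (\<lambda>_. G) = (\<lambda>_. G)"
  by (rule ext) (simp add: shift_interp_def split: nat.split)

lemma posneg:
  shows "fpos A \<Longrightarrow> interp A (\<lambda>_. Pset x) \<subseteq> Pset x"
    and "fneg B \<Longrightarrow> Pset x \<subseteq> interp B (\<lambda>_. Pset x)"
proof (induct rule: fpos_fneg.inducts)
  case (pos_var i) then show ?case by simp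
next
  case (neg_var i) then show ?case by simp
next
  case (pos_arr A B)
  show ?case
  proof
    fix t assume "t \<in> interp (Arr B A) (\<lambda>_. Pset x)"
    then have "LApp t (LVar x) \<in> interp A (\<lambda>_. Pset x)"
      using pos_arr Pset_var by (auto simp: arrow_set_def)
    then show "t \<in> Pset x" using pos_arr Pset_pull by blast
  qed
next
  case (neg_arr A B)
  show ?case
  proof
    fix v assume v: "v \<in> Pset x"
    show "v \<in> interp (Arr B A) (\<lambda>_. Pset x)"
      unfolding interp.simps arrow_set_def
    proof
      show "\<forall>w\<in>interp B (\<lambda>_. Pset x). LApp v w \<in> interp A (\<lambda>_. Pset x)"
        using neg_arr(2,4) Pset_app[OF v] by blast
    qed
  qed
next
  case (pos_all A)
  show ?case
  proof
    fix t assume "t \<in> interp (All A) (\<lambda>_. Pset x)"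
    then have "t \<in> interp A (shift_interp (Pset x) (\<lambda>_. Pset x))"
      using Pset_sat by auto
    then show "t \<in> Pset x" using pos_all shift_const by auto
  qed
qed

definition drop_at :: "nat \<Rightarrow> (nat \<Rightarrow> lterm set) \<Rightarrow> nat \<Rightarrow> lterm set" where
  "drop_at k I = (\<lambda>n. if n < k then I n else I (Suc n))"

definition ins_at :: "nat \<Rightarrow> lterm set \<Rightarrow> (nat \<Rightarrow> lterm set) \<Rightarrow> nat \<Rightarrow> lterm set" where
  "ins_at k X I = (\<lambda>n. if n < k then I n else if n = k then X else I (n - 1))"

lemma drop_shift: "drop_at (Suc k) (shift_interp G I) = shift_interp G (drop_at k I)"
  by (rule ext) (simp add: drop_at_def shift_interp_def split: nat.split)

lemma interp_lift: "interp (ty_lift A k) I = interp A (drop_at k I)"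
proof (induct A arbitrary: k I)
  case (TVar x) then show ?case by (simp add: drop_at_def)
next
  case (Arr A1 A2) then show ?case by simp
next
  case (All A) then show ?case by (simp add: drop_shift)
qed

lemma drop0_shift: "drop_at 0 (shift_interp G I) = I"
  by (rule ext) (simp add: drop_at_def shift_interp_def)

lemma ins_shift: "ins_at (Suc k) X (shift_interp G I) = shift_interp G (ins_at k X I)"
  by (rule ext) (simp add: ins_at_def shift_interp_def split: nat.split)

lemma interp_subst: "interp (ty_subst A C k) I = interp A (ins_at k (interp C I) I)"
proof (induct A arbitrary: k C I)
  case (TVar x) then show ?case by (simp add: ins_at_def)
next
  case (Arr A1 A2) then show ?case by simp
next
  case (All A) then show ?case by (simp add: ins_shift interp_lift drop0_shift)
qed

lemma ins0: "ins_at 0 X I = shift_interp X I"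
  by (rule ext) (simp add: ins_at_def shift_interp_def split: nat.split)

lemma sat_arrow: "saturated G' \<Longrightarrow> saturated (arrow_set G G')"
  unfolding saturated_def arrow_set_def by (blast intro: whred_app)

lemma sat_Inter: "(\<And>G. G \<in> S \<Longrightarrow> saturated G) \<Longrightarrow> saturated (\<Inter> S)"
  unfolding saturated_def by blast

lemma sat_shift: "(\<forall>n. saturated (I n)) \<Longrightarrow> saturated G \<Longrightarrow> \<forall>n. saturated (shift_interp G I n)"
  by (simp add: shift_interp_def split: nat.split)

lemma sat_interp: "\<forall>n. saturated (I n) \<Longrightarrow> saturated (interp A I)"
proof (induct A arbitrary: I)
  case (TVar x) then show ?case by simp
next
  case (Arr A1 A2) then show ?case by (simp add: sat_arrow)
next
  case (All A)
  show ?case unfolding interp.simps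
    by (rule sat_Inter) (use All sat_shift in blast)
qed

definition exts :: "(nat \<Rightarrow> lterm) \<Rightarrow> nat \<Rightarrow> lterm" where
  "exts \<sigma> = (\<lambda>n. case n of 0 \<Rightarrow> LVar 0 | Suc m \<Rightarrow> lt_lift (\<sigma> m) 0)"

definition scons :: "lterm \<Rightarrow> (nat \<Rightarrow> lterm) \<Rightarrow> nat \<Rightarrow> lterm" where
  "scons v \<sigma> = (\<lambda>n. case n of 0 \<Rightarrow> v | Suc m \<Rightarrow> \<sigma> m)"

fun psubst :: "(nat \<Rightarrow> lterm) \<Rightarrow> lterm \<Rightarrow> lterm" where
  "psubst \<sigma> (LVar i) = \<sigma> i"
| "psubst \<sigma> (LApp s t) = LApp (psubst \<sigma> s) (psubst \<sigma> t)"
| "psubst \<sigma> (LLam t) = LLam (psubst (exts \<sigma>) t)"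

lemma exts_id: "exts LVar = LVar"
  by (rule ext) (simp add: exts_def split: nat.split)

lemma psubst_id: "psubst LVar t = t"
  by (induct t) (simp_all add: exts_id)

lemma exts_subst: "(\<lambda>n. lt_subst (exts \<sigma> n) (lt_lift s 0) (Suc k)) = exts (\<lambda>n. lt_subst (\<sigma> n) s k)"
  by (rule ext) (simp add: exts_def lift_subst_lt split: nat.split)

lemma subst_psubst: "lt_subst (psubst \<sigma> t) s k = psubst (\<lambda>n. lt_subst (\<sigma> n) s k) t"
proof (induct t arbitrary: \<sigma> s k)
  case (LVar x) then show ?case by simp
next
  case (LApp t1 t2) then show ?case by simp
next
  case (LLam t) then show ?case by (simp add: exts_subst)
qed

lemma exts_beta: "lt_subst (psubst (exts \<sigma>) t) v 0 = psubst (scons v \<sigma>) t"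
proof -
  have "(\<lambda>n. lt_subst (exts \<sigma> n) v 0) = scons v \<sigma>"
    by (rule ext) (simp add: exts_def scons_def split: nat.split)
  then show ?thesis by (simp add: subst_psubst)
qed

lemma adequacy:
  "typing \<Gamma> t A \<Longrightarrow> \<forall>n. saturated (I n) \<Longrightarrow> (\<forall>i<length \<Gamma>. \<sigma> i \<in> interp (\<Gamma> ! i) I)
    \<Longrightarrow> psubst \<sigma> t \<in> interp A I"
proof (induct arbitrary: I \<sigma> rule: typing.induct)
  case (T_ax i \<Gamma>) then show ?case by simp
next
  case (T_absI B \<Gamma> t C)
  show ?case unfolding psubst.simps interp.simps arrow_set_def
  proof
    show "\<forall>v\<in>interp B I. LApp (LLam (psubst (exts \<sigma>) t)) v \<in> interp C I"
    proof
      fix v assume v: "v \<in> interp B I"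
      have "\<forall>i<length (B # \<Gamma>). scons v \<sigma> i \<in> interp ((B # \<Gamma>) ! i) I"
        using v T_absI(5) by (auto simp: scons_def nth_Cons split: nat.split)
      then have "psubst (scons v \<sigma>) t \<in> interp C I" using T_absI(3)[OF T_absI(4)] by blast
      then have "lt_subst (psubst (exts \<sigma>) t) v 0 \<in> interp C I" by (simp add: exts_beta)
      moreover have "whred (LApp (LLam (psubst (exts \<sigma>) t)) v) (lt_subst (psubst (exts \<sigma>) t) v 0)"
        unfolding whred_def by (blast intro: wh_redex)
      ultimately show "LApp (LLam (psubst (exts \<sigma>) t)) v \<in> interp C I"
        using sat_interp[OF T_absI(4)] unfolding saturated_def by blast
    qed
  qed
next
  case (T_appE \<Gamma> u B C v)
  then show ?case by (auto simp: arrow_set_def)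
next
  case (T_allI \<Gamma> t A)
  show ?case unfolding interp.simps
  proof (rule InterI)
    fix X assume "X \<in> {interp A (shift_interp G I) |G. saturated G}"
    then obtain G where G: "saturated G" and X: "X = interp A (shift_interp G I)" by blast
    have "\<forall>i<length (map (\<lambda>T. ty_lift T 0) \<Gamma>). \<sigma> i \<in> interp (map (\<lambda>T. ty_lift T 0) \<Gamma> ! i) (shift_interp G I)"
      using T_allI(5) by (simp add: interp_lift drop0_shift)
    then show "psubst \<sigma> t \<in> X" using T_allI(2)[OF sat_shift[OF T_allI(4) G]] X by blast
  qed
next
  case (T_allE \<Gamma> t A C)
  have "psubst \<sigma> t \<in> interp (All A) I" using T_allE by blast
  moreover have "saturated (interp C I)" using sat_interp T_allE(4) by blast
  ultimately have "psubst \<sigma> t \<in> interp A (shift_interp (interp C I) I)" by auto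
  then show ?case by (simp add: interp_subst ins0)
qed

theorem theorem2p1p9:
  fixes A :: ty and u :: lterm
  assumes "proper A" and "ty_closed A" and "fpos A"
    and "lt_closed u" and "typing [] u A"
  shows "realize A \<noteq> {} \<and> (\<forall>t\<in>realize A. \<exists>t'. beta\<^sup>*\<^sup>* t t' \<and> lt_closed t')"
proof
  have "u \<in> realize A"
    unfolding realize_def
  proof (rule InterI)
    fix X assume "X \<in> {interp A I |I. \<forall>n. saturated (I n)}"
    then obtain I where I: "\<forall>n. saturated (I n)" and X: "X = interp A I" by blast
    from adequacy[OF assms(5) I, of LVar] show "u \<in> X" using X by (simp add: psubst_id)
  qed
  then show "realize A \<noteq> {}" by blast
next
  show "\<forall>t\<in>realize A. \<exists>t'. beta\<^sup>*\<^sup>* t t' \<and> lt_closed t'"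
  proof
    fix t assume t: "t \<in> realize A"
    obtain x where x: "lt_closed_at x t" using closed_ex by blast
    have "t \<in> interp A (\<lambda>_. Pset x)"
      using t Pset_sat unfolding realize_def by blast
    then have "t \<in> Pset x" using posneg(1)[OF assms(3)] by blast
    then obtain t' where t': "beta\<^sup>*\<^sup>* t t'" "vok x 0 t'" unfolding Pset_def by blast
    then have "lt_closed_at x t'" using betas_closed x by blast
    then have "lt_closed t'" using vok_closed[of x 0 t'] t' by (simp add: lt_closed_def)
    then show "\<exists>t'. beta\<^sup>*\<^sup>* t t' \<and> lt_closed t'" using t' by blast
  qed
qed

end
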